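(* Let $0<c_3<1/4$, $c_5\in\mathbb{R}$, $b_2=\frac{1-\sqrt{1-4c_3}}{2}$, $b_3=\frac{1+\sqrt{1-4c_3}}{2}$. For $b_2\le\alpha\le b_3$ put $$J(\alpha)=\int_{b_2}^{\alpha}\frac{(c_3+\rho^2)^{2m-1}}{\{\rho^{2m}-(c_3+\rho^2)^{2m}\}^{\frac{2m-1}{2m}}}\,d\rho$$ (a finite, strictly increasing function) and $d_2=J(b_3)>0$. Define $\hat\alpha:[c_5-d_2,c_5+d_2]\to[b_2,b_3]$ by letting $\hat\alpha(u)$ be the unique $\alpha\in[b_2,b_3]$ with $J(\alpha)=|u-c_5|$, and extend it to $\alpha^*:\mathbb{R}\to[b_2,b_3]$ by $\alpha^*(u+2kd_2)=\hat\alpha(u)$ for $u\in[c_5-d_2,c_5+d_2]$, $k\in\mathbb{Z}$. Then $\alpha^*$ is a well-defined, $2d_2$-periodic $C^2$ function on $\mathbb{R}$, and the rotational surface $$f^*(u,v)=(\alpha^*(u)\cos v,\ \alpha^*(u)\sin v,\ u),\qquad (u,v)\in\mathbb{R}\times[0,2\pi],$$ has a Birkhoff–Gauss map that is $C^1$ on the whole domain (with orientation: $\nabla\Phi(\eta)$ is a positive multiple of $f^*_u\times f^*_v$) and has constant Minkowski mean curvature $-1$.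
   Context: Fix an integer $m\ge 2$. Let $\Phi(x_1,x_2,x_3)=(x_1^2+x_2^2)^m+x_3^{2m}$ and let $\|\cdot\|$ be the norm on $\mathbb{R}^3$ whose unit sphere is $S=\{x\in\mathbb{R}^3:\Phi(x)=1\}$ (a smooth, strictly convex surface). For a surface given by a parametrization $f(s,v)$, its Birkhoff–Gauss map $\eta$ is the map into $S$ defined by requiring $\eta\in S$ and $\nabla\Phi(\eta)=\mu\, f_s\times f_v$ for some function $\mu>0$, where $\times$ is the standard cross product (so the tangent plane of $S$ at $\eta(p)$ is parallel to $T_pM$, and $d\eta_p$ is an endomorphism of $T_pM$). Where $\eta$ is $C^1$, the Minkowski mean curvature is $H=\tfrac12\operatorname{trace}(d\eta_p)$. *)

theory Defs
  imports "HOL-Analysis.Analysis" "HOL-Analysis.Cross3"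
begin

text \<open>The gauge function Phi; its level set Phi = 1 is the unit sphere S.\<close>
definition Phi :: "nat \<Rightarrow> real^3 \<Rightarrow> real" where
  "Phi m x = ((x$1)^2 + (x$2)^2)^m + (x$3)^(2*m)"

text \<open>The integrand of J and the function J itself (Henstock-Kurzweil integral,
  which covers the convergent improper integral at the endpoints).\<close>
definition Jint :: "nat \<Rightarrow> real \<Rightarrow> real \<Rightarrow> real" where
  "Jint m c3 \<rho> = (c3 + \<rho>^2)^(2*m-1) /
      (\<rho>^(2*m) - (c3 + \<rho>^2)^(2*m)) powr ((real (2*m) - 1) / real (2*m))"

definition b2 :: "real \<Rightarrow> real" where "b2 c3 = (1 - sqrt (1 - 4*c3)) / 2"
definition b3 :: "real \<Rightarrow> real" where "b3 c3 = (1 + sqrt (1 - 4*c3)) / 2"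

definition J :: "nat \<Rightarrow> real \<Rightarrow> real \<Rightarrow> real" where
  "J m c3 \<alpha> = integral {b2 c3..\<alpha>} (Jint m c3)"

definition d2 :: "nat \<Rightarrow> real \<Rightarrow> real" where "d2 m c3 = J m c3 (b3 c3)"

definition alpha_hat :: "nat \<Rightarrow> real \<Rightarrow> real \<Rightarrow> real \<Rightarrow> real" where
  "alpha_hat m c3 c5 u = (THE \<alpha>. \<alpha> \<in> {b2 c3..b3 c3} \<and> J m c3 \<alpha> = \<bar>u - c5\<bar>)"

definition is_alpha_star :: "nat \<Rightarrow> real \<Rightarrow> real \<Rightarrow> (real \<Rightarrow> real) \<Rightarrow> bool" where
  "is_alpha_star m c3 c5 a \<longleftrightarrow>
     (\<forall>u \<in> {c5 - d2 m c3..c5 + d2 m c3}. \<forall>k::int.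
        a (u + 2 * real_of_int k * d2 m c3) = alpha_hat m c3 c5 u)"

definition C2_real :: "(real \<Rightarrow> real) \<Rightarrow> bool" where
  "C2_real f \<longleftrightarrow> (\<forall>x. f differentiable at x) \<and> (\<forall>x. deriv f differentiable at x)
      \<and> continuous_on UNIV (deriv (deriv f))"

definition pdom :: "(real \<times> real) set" where "pdom = UNIV \<times> {0..2*pi}"

definition rot_surf :: "(real \<Rightarrow> real) \<Rightarrow> real \<times> real \<Rightarrow> real^3" where
  "rot_surf a p = vector [a (fst p) * cos (snd p), a (fst p) * sin (snd p), fst p]"

definition pd_u :: "(real \<times> real \<Rightarrow> real^3) \<Rightarrow> real \<times> real \<Rightarrow> real^3" where
  "pd_u g p = vector_derivative (\<lambda>u. g (u, snd p)) (at (fst p))"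

definition pd_v :: "(real \<times> real \<Rightarrow> real^3) \<Rightarrow> real \<times> real \<Rightarrow> real^3" where
  "pd_v g p = vector_derivative (\<lambda>v. g (fst p, v)) (at (snd p) within {0..2*pi})"

definition is_BG_map :: "nat \<Rightarrow> (real \<times> real \<Rightarrow> real^3) \<Rightarrow> (real \<times> real \<Rightarrow> real^3) \<Rightarrow> bool" where
  "is_BG_map m f \<eta> \<longleftrightarrow>
     (\<forall>p \<in> pdom. Phi m (\<eta> p) = 1 \<and>
        (\<exists>\<mu> > 0. GDERIV (Phi m) (\<eta> p) :> \<mu> *\<^sub>R (cross3 (pd_u f p) (pd_v f p))))"

definition C1_on_dom :: "(real \<times> real \<Rightarrow> real^3) \<Rightarrow> bool" where
  "C1_on_dom g \<longleftrightarrow> (\<exists>D. (\<forall>p \<in> pdom. (g has_derivative D p) (at p within pdom)) \<and>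
        (\<forall>h. continuous_on pdom (\<lambda>p. D p h)))"

text \<open>Minkowski mean curvature at p equals H: (1/2) trace of d eta_p as endomorphism
  of T_pM, where d eta_p(f_u) = eta_u and d eta_p(f_v) = eta_v.\<close>
definition mink_mean_curv_at :: "(real \<times> real \<Rightarrow> real^3) \<Rightarrow> (real \<times> real \<Rightarrow> real^3) \<Rightarrow> real \<times> real \<Rightarrow> real \<Rightarrow> bool" where
  "mink_mean_curv_at f \<eta> p H \<longleftrightarrow>
     (\<exists>a11 a12 a21 a22.
        pd_u \<eta> p = a11 *\<^sub>R pd_u f p + a21 *\<^sub>R pd_v f p \<and>
        pd_v \<eta> p = a12 *\<^sub>R pd_u f p + a22 *\<^sub>R pd_v f p \<and>
        H = (a11 + a22) / 2)"

end

theory Submission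
  imports Defs
begin



locale sett =
  fixes m :: nat and c3 :: real
  assumes m2: "m \<ge> 2" and c3pos: "0 < c3" and c3lt: "c3 < 1/4"
begin

definition "sq = sqrt (1 - 4*c3)"
definition "q y = c3 + y^2"
definition "Dd y = y^(2*m) - (q y)^(2*m)"

lemma sq_props: "0 < sq" "sq < 1" "sq^2 = 1 - 4*c3"
  using c3pos c3lt by (auto simp: sq_def real_sqrt_lt_1_iff)

lemma b_props: "0 < b2 c3" "b2 c3 < b3 c3" "b3 c3 < 1" "b2 c3 + b3 c3 = 1" "b2 c3 * b3 c3 = c3"
  using sq_props unfolding b2_def b3_def sq_def[symmetric]
  by (auto simp: field_simps power2_eq_square)

lemma y_minus_q: "y - q y = (y - b2 c3) * (b3 c3 - y)"
proof -
  have "(y - b2 c3) * (b3 c3 - y) = -(y^2) + (b2 c3 + b3 c3) * y - b2 c3 * b3 c3"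
    by (simp add: algebra_simps power2_eq_square)
  thus ?thesis using b_props by (simp add: q_def)
qed

lemma q_pos: "q y > 0" using c3pos by (simp add: q_def add_pos_nonneg)

lemma q_le: "y \<in> {b2 c3..b3 c3} \<Longrightarrow> q y \<le> y"
proof -
  assume "y \<in> {b2 c3..b3 c3}"
  hence "(y - b2 c3) * (b3 c3 - y) \<ge> 0" by (intro mult_nonneg_nonneg) auto
  thus ?thesis using y_minus_q[of y] by linarith
qed

lemma q_lt: "y \<in> {b2 c3<..<b3 c3} \<Longrightarrow> q y < y"
proof -
  assume "y \<in> {b2 c3<..<b3 c3}"
  hence "(y - b2 c3) * (b3 c3 - y) > 0" by (intro mult_pos_pos) auto
  thus ?thesis using y_minus_q[of y] by linarith
qed

lemma q_eq: "y = b2 c3 \<or> y = b3 c3 \<Longrightarrow> q y = y"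
  using y_minus_q[of y] by auto

lemma Dd_bound: assumes "y \<in> {b2 c3..b3 c3}"
  shows "Dd y \<ge> (2*m) * c3^(2*m-1) * ((y - b2 c3) * (b3 c3 - y))"
proof -
  have qp: "q y > 0" by (rule q_pos)
  have le: "q y \<le> y" using q_le assms .
  define x where "x = y / q y - 1"
  have x0: "x \<ge> 0" using le qp by (simp add: x_def field_simps)
  have y: "y = q y * (1 + x)" using qp by (simp add: x_def field_simps)
  have B: "1 + real (2*m) * x \<le> (1+x)^(2*m)"
    by (rule Bernoulli_inequality) (use x0 in simp)
  have "y^(2*m) = q y^(2*m) * (1+x)^(2*m)" by (subst y) (simp add: power_mult_distrib)
  also have "\<dots> \<ge> q y^(2*m) * (1 + real (2*m) * x)"
    using B qp by (intro mult_left_mono) auto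
  finally have "Dd y \<ge> q y^(2*m) * real (2*m) * x" unfolding Dd_def by (simp add: algebra_simps)
  moreover have "q y^(2*m) * x = q y^(2*m-1) * (y - q y)"
  proof -
    have "q y^(2*m) = q y^(2*m-1) * q y" using m2
      by (metis Suc_diff_1 mult_pos_pos pos2 power_Suc2 zero_less_iff_neq_zero not_numeral_le_zero)
    thus ?thesis using qp by (simp add: x_def field_simps)
  qed
  moreover have "q y^(2*m-1) \<ge> c3^(2*m-1)"
    using c3pos by (intro power_mono) (auto simp: q_def)
  moreover have "y - q y \<ge> 0" using le by simp
  ultimately have "Dd y \<ge> real (2*m) * c3^(2*m-1) * (y - q y)"
    by (smt (verit, ccfv_SIG) mult.commute mult.left_commute mult_left_mono of_nat_0_le_iff)
  thus ?thesis by (simp add: y_minus_q)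
qed

lemma Dd_pos: "y \<in> {b2 c3<..<b3 c3} \<Longrightarrow> Dd y > 0"
proof -
  assume a: "y \<in> {b2 c3<..<b3 c3}"
  have "q y < y" using q_lt a .
  hence "q y ^(2*m) < y^(2*m)" using q_pos[of y] m2 by (intro power_strict_mono) auto
  thus ?thesis by (simp add: Dd_def)
qed

lemma Dd_nonneg: "y \<in> {b2 c3..b3 c3} \<Longrightarrow> Dd y \<ge> 0"
proof -
  assume a: "y \<in> {b2 c3..b3 c3}"
  have "q y \<le> y" using q_le a .
  hence "q y ^(2*m) \<le> y^(2*m)" using q_pos[of y] by (intro power_mono) auto
  thus ?thesis by (simp add: Dd_def)
qed

lemma Dd_zero: "y = b2 c3 \<or> y = b3 c3 \<Longrightarrow> Dd y = 0"
  using q_eq by (auto simp: Dd_def)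

end



context sett begin

definition "ee = (real (2*m) - 1) / real (2*m)"
definition "E y = root (2*m) (Dd y)"
definition "g y = (E y / q y)^(2*m-1)"

lemma ee_props: "0 < ee" "ee < 1" "ee = 1/real (2*m) * real (2*m-1)"
  using m2 by (auto simp: ee_def field_simps of_nat_diff)

lemma E_pow: "y \<in> {b2 c3..b3 c3} \<Longrightarrow> E y ^ (2*m) = Dd y"
  using Dd_nonneg m2 by (simp add: E_def)

lemma E_pos: "y \<in> {b2 c3<..<b3 c3} \<Longrightarrow> E y > 0"
  using Dd_pos m2 by (simp add: E_def)

lemma E_nonneg: "y \<in> {b2 c3..b3 c3} \<Longrightarrow> E y \<ge> 0"
  using Dd_nonneg m2 by (simp add: E_def)

lemma E_zero: "y = b2 c3 \<or> y = b3 c3 \<Longrightarrow> E y = 0"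
  using Dd_zero by (simp add: E_def)

lemma Jint_alt: "Jint m c3 y = q y^(2*m-1) / Dd y powr ee"
  by (simp add: Jint_def q_def Dd_def ee_def)

lemma Dd_powr: assumes "y \<in> {b2 c3<..<b3 c3}" shows "Dd y powr ee = E y ^ (2*m-1)"
proof -
  have "Dd y powr ee = (Dd y powr (1/real (2*m))) powr real (2*m-1)"
    by (simp add: powr_powr ee_props(3))
  also have "Dd y powr (1/real (2*m)) = E y"
    using Dd_pos[OF assms] m2 by (simp add: E_def root_powr_inverse)
  also have "E y powr real (2*m-1) = E y ^ (2*m-1)"
    using E_pos[OF assms] by (simp add: powr_realpow)
  finally show ?thesis .
qed

lemma Jint_g: "y \<in> {b2 c3<..<b3 c3} \<Longrightarrow> Jint m c3 y = 1 / g y"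
  using q_pos[of y] by (simp add: Jint_alt Dd_powr g_def power_divide)

lemma g_pos: "y \<in> {b2 c3<..<b3 c3} \<Longrightarrow> g y > 0"
  using q_pos[of y] E_pos[of y] by (simp add: g_def)

lemma g_zero: "y = b2 c3 \<or> y = b3 c3 \<Longrightarrow> g y = 0"
  using E_zero m2 by (auto simp: g_def)

lemma cont_E: "continuous_on UNIV E"
  unfolding E_def Dd_def q_def by (intro continuous_intros)

lemma cont_g: "continuous_on UNIV g"
proof -
  have "continuous_on UNIV q" unfolding q_def by (intro continuous_intros)
  thus ?thesis unfolding g_def using q_pos by (intro continuous_intros cont_E) (auto simp: less_imp_neq[symmetric])
qed

lemma Jint_cont: "continuous_on {b2 c3<..<b3 c3} (Jint m c3)"
proof -
  have "continuous_on {b2 c3<..<b3 c3} (\<lambda>y. 1 / g y)"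
    using g_pos by (intro continuous_intros continuous_on_subset[OF cont_g]) (auto simp: less_imp_neq[symmetric])
  thus ?thesis by (rule continuous_on_eq) (simp add: Jint_g)
qed

lemma Jint_pos: "y \<in> {b2 c3<..<b3 c3} \<Longrightarrow> Jint m c3 y > 0"
  using g_pos by (simp add: Jint_g)

lemma powr_int: fixes a b r :: real assumes "a \<le> b" "0 < r"
  shows "(\<lambda>y. (y - a) powr (r - 1)) integrable_on {a..b}"
    and "(\<lambda>y. (b - y) powr (r - 1)) integrable_on {a..b}"
proof -
  have c1: "continuous_on {a..b} (\<lambda>y. (y - a) powr r / r)"
    unfolding continuous_on_def
  proof
    fix x assume "x \<in> {a..b}"
    have ev: "eventually (\<lambda>y. y - a \<ge> 0) (at x within {a..b})"
      by (auto simp: eventually_at_filter)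
    show "((\<lambda>y. (y - a) powr r / r) \<longlongrightarrow> (x - a) powr r / r) (at x within {a..b})"
      by (intro tendsto_divide tendsto_powr' tendsto_intros) (use ev assms in auto)
  qed
  have "((\<lambda>y. (y - a) powr (r - 1)) has_integral ((b - a) powr r / r - (a - a) powr r / r)) {a..b}"
  proof (rule fundamental_theorem_of_calculus_interior[OF assms(1) c1])
    fix x assume "x \<in> {a<..<b}"
    thus "((\<lambda>y. (y - a) powr r / r) has_vector_derivative (x - a) powr (r - 1)) (at x)"
      unfolding has_real_derivative_iff_has_vector_derivative[symmetric]
      using assms by (auto intro!: derivative_eq_intros)
  qed
  thus "(\<lambda>y. (y - a) powr (r - 1)) integrable_on {a..b}" by blast
  have c2: "continuous_on {a..b} (\<lambda>y. - ((b - y) powr r / r))"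
    unfolding continuous_on_def
  proof
    fix x assume "x \<in> {a..b}"
    have ev: "eventually (\<lambda>y. b - y \<ge> 0) (at x within {a..b})"
      by (auto simp: eventually_at_filter)
    show "((\<lambda>y. - ((b - y) powr r / r)) \<longlongrightarrow> - ((b - x) powr r / r)) (at x within {a..b})"
      by (intro tendsto_minus tendsto_divide tendsto_powr' tendsto_intros) (use ev assms in auto)
  qed
  have "((\<lambda>y. (b - y) powr (r - 1)) has_integral (- ((b - b) powr r / r) - - ((b - a) powr r / r))) {a..b}"
  proof (rule fundamental_theorem_of_calculus_interior[OF assms(1) c2])
    fix x assume "x \<in> {a<..<b}"
    thus "((\<lambda>y. - ((b - y) powr r / r)) has_vector_derivative (b - x) powr (r - 1)) (at x)"
      unfolding has_real_derivative_iff_has_vector_derivative[symmetric]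
      using assms by (auto intro!: derivative_eq_intros)
  qed
  thus "(\<lambda>y. (b - y) powr (r - 1)) integrable_on {a..b}" by blast
qed

end



context sett begin

abbreviation "B2 \<equiv> b2 c3"
abbreviation "B3 \<equiv> b3 c3"

lemma prod_bound:
  fixes x w L e :: real
  assumes "x > 0" "w > 0" "x + w = L" "e \<ge> 0"
  shows "x powr (-e) * w powr (-e) \<le> (L/2) powr (-e) * (x powr (-e) + w powr (-e))"
proof (cases "x \<ge> L/2")
  case True
  have "x powr (-e) \<le> (L/2) powr (-e)" using True assms by (intro powr_mono2') auto
  hence "x powr (-e) * w powr (-e) \<le> (L/2) powr (-e) * w powr (-e)" by (simp add: mult_right_mono)
  also have "\<dots> \<le> (L/2) powr (-e) * (x powr (-e) + w powr (-e))" by (intro mult_left_mono) auto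
  finally show ?thesis .
next
  case False
  hence "w \<ge> L/2" using assms by auto
  hence "w powr (-e) \<le> (L/2) powr (-e)" using assms by (intro powr_mono2') auto
  hence "x powr (-e) * w powr (-e) \<le> x powr (-e) * (L/2) powr (-e)" by (simp add: mult_left_mono)
  also have "\<dots> \<le> (L/2) powr (-e) * (x powr (-e) + w powr (-e))" by (simp add: algebra_simps)
  finally show ?thesis .
qed

definition "KK = real (2*m) * c3^(2*m-1)"
definition "CC = KK powr (-ee) * ((B3 - B2)/2) powr (-ee)"

lemma KK_pos: "KK > 0" using m2 c3pos by (simp add: KK_def)

lemma Jint_bound: assumes y: "y \<in> {B2<..<B3}"
  shows "Jint m c3 y \<le> CC * ((y - B2) powr (-ee) + (B3 - y) powr (-ee))"
proof -
  define x where "x = y - B2"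
  define w where "w = B3 - y"
  have x: "x > 0" and w: "w > 0" using y by (auto simp: x_def w_def)
  have q1: "q y^(2*m-1) \<le> 1"
    using q_pos[of y] q_le[of y] y b_props by (intro power_le_one) auto
  have D1: "Dd y \<ge> KK * (x * w)" using Dd_bound[of y] y by (auto simp: KK_def x_def w_def)
  have D2: "Dd y powr ee \<ge> (KK * (x * w)) powr ee"
    using D1 KK_pos x w ee_props by (intro powr_mono2) auto
  have D3: "(KK * (x * w)) powr ee = KK powr ee * x powr ee * w powr ee"
    using KK_pos x w by (simp add: powr_mult)
  have pos: "KK powr ee * x powr ee * w powr ee > 0" using KK_pos x w by simp
  have "Jint m c3 y = q y^(2*m-1) / Dd y powr ee" by (rule Jint_alt)
  also have "\<dots> \<le> 1 / Dd y powr ee"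
    using q1 Dd_pos[OF y] by (intro divide_right_mono) auto
  also have "\<dots> \<le> 1 / (KK powr ee * x powr ee * w powr ee)"
    using D2 D3 pos by (intro divide_left_mono) (auto intro!: mult_pos_pos)
  also have "\<dots> = KK powr (-ee) * (x powr (-ee) * w powr (-ee))"
    using KK_pos x w by (simp add: powr_minus divide_simps)
  also have "\<dots> \<le> KK powr (-ee) * (((B3 - B2)/2) powr (-ee) * (x powr (-ee) + w powr (-ee)))"
    using prod_bound[OF x w _ , of "B3 - B2" ee] ee_props
    by (intro mult_left_mono) (auto simp: x_def w_def)
  finally show ?thesis by (simp add: CC_def x_def w_def mult.assoc)
qed

lemma Jint_integrable: "Jint m c3 integrable_on {B2..B3}"
proof -
  have bi: "(\<lambda>y. CC * ((y - B2) powr (-ee) + (B3 - y) powr (-ee))) integrable_on {B2..B3}"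
  proof -
    have "(\<lambda>y. (y - B2) powr (-ee) + (B3 - y) powr (-ee)) integrable_on {B2..B3}"
      using powr_int[of B2 B3 "1 - ee"] b_props ee_props by (intro integrable_add) auto
    from integrable_on_cmult_left[OF this, of CC] show ?thesis by simp
  qed
  have "Jint m c3 integrable_on {B2<..<B3}"
  proof (rule measurable_bounded_by_integrable_imp_integrable_real)
    show "Jint m c3 \<in> borel_measurable (lebesgue_on {B2<..<B3})"
      by (intro continuous_imp_measurable_on_sets_lebesgue Jint_cont) auto
    show "(\<lambda>y. CC * ((y - B2) powr (-ee) + (B3 - y) powr (-ee))) integrable_on {B2<..<B3}"
      using bi by (simp add: integrable_on_Icc_iff_Ioo)
    fix y assume "y \<in> {B2<..<B3}"
    thus "\<bar>Jint m c3 y\<bar> \<le> CC * ((y - B2) powr (-ee) + (B3 - y) powr (-ee))"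
      using Jint_pos Jint_bound by (simp add: less_imp_le)
  qed auto
  thus ?thesis by (simp add: integrable_on_Icc_iff_Ioo)
qed

lemma Jint_integrable_sub: "\<alpha> \<in> {B2..B3} \<Longrightarrow> Jint m c3 integrable_on {B2..\<alpha>}"
  by (rule integrable_on_subinterval[OF Jint_integrable]) auto

lemma J_cont: "continuous_on {B2..B3} (J m c3)"
  unfolding J_def by (rule indefinite_integral_continuous_1[OF Jint_integrable])

lemma J_deriv: assumes "y \<in> {B2<..<B3}" shows "(J m c3 has_real_derivative Jint m c3 y) (at y)"
proof -
  have "((\<lambda>u. integral {B2..u} (Jint m c3)) has_vector_derivative Jint m c3 y) (at y within ({B2..B3} - {}))"
    using assms Jint_cont
    by (intro integral_has_vector_derivative_continuous_at Jint_integrable)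
       (auto simp: continuous_on_eq_continuous_at continuous_at_imp_continuous_within)
  hence "((\<lambda>u. integral {B2..u} (Jint m c3)) has_vector_derivative Jint m c3 y) (at y)"
    using assms by (subst (asm) at_within_interior) auto
  moreover have "J m c3 = (\<lambda>u. integral {B2..u} (Jint m c3))" by (simp add: J_def fun_eq_iff)
  ultimately show ?thesis by (simp add: has_real_derivative_iff_has_vector_derivative)
qed

lemma J_b2: "J m c3 B2 = 0" by (simp add: J_def)

lemma J_strict: "strict_mono_on {B2..B3} (J m c3)"
proof (rule strict_mono_onI)
  fix x y assume xy: "x \<in> {B2..B3}" "y \<in> {B2..B3}" "x < y"
  show "J m c3 x < J m c3 y"
  proof (rule DERIV_pos_imp_increasing_open[OF xy(3)])
    fix z assume "x < z" "z < y"
    hence z: "z \<in> {B2<..<B3}" using xy by auto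
    show "\<exists>d. (J m c3 has_real_derivative d) (at z) \<and> d > 0"
      using J_deriv[OF z] Jint_pos[OF z] by blast
    qed (rule continuous_on_subset[OF J_cont], use xy in auto)
qed

lemma d2_pos: "d2 m c3 > 0"
  using J_strict b_props J_b2 unfolding d2_def strict_mono_on_def
  by (metis atLeastAtMost_iff order_refl less_imp_le)

end



context sett begin

abbreviation "dd \<equiv> d2 m c3"
definition "Jinv y = (THE \<alpha>. \<alpha> \<in> {B2..B3} \<and> J m c3 \<alpha> = y)"

lemma J_inj: "\<alpha> \<in> {B2..B3} \<Longrightarrow> \<beta> \<in> {B2..B3} \<Longrightarrow> J m c3 \<alpha> = J m c3 \<beta> \<Longrightarrow> \<alpha> = \<beta>"
  using J_strict unfolding strict_mono_on_def by (metis linorder_neqE_linordered_idom less_irrefl)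

lemma J_ex1: assumes "y \<in> {0..dd}" shows "\<exists>!\<alpha>. \<alpha> \<in> {B2..B3} \<and> J m c3 \<alpha> = y"
proof -
  obtain x where "B2 \<le> x" "x \<le> B3" "J m c3 x = y"
    using IVT'[of "J m c3" B2 y B3] assms J_b2 J_cont b_props by (auto simp: d2_def)
  thus ?thesis using J_inj by auto
qed

lemma Jinv: assumes "y \<in> {0..dd}" shows "Jinv y \<in> {B2..B3}" "J m c3 (Jinv y) = y"
  using theI'[OF J_ex1[OF assms]] unfolding Jinv_def by auto

lemma Jinv_J: "\<alpha> \<in> {B2..B3} \<Longrightarrow> Jinv (J m c3 \<alpha>) = \<alpha>"
  unfolding Jinv_def by (rule the_equality) (auto intro: J_inj)

lemma J_range: "\<alpha> \<in> {B2..B3} \<Longrightarrow> J m c3 \<alpha> \<in> {0..dd}"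
proof -
  assume a: "\<alpha> \<in> {B2..B3}"
  have "J m c3 B2 \<le> J m c3 \<alpha>" "J m c3 \<alpha> \<le> J m c3 B3"
    using strict_mono_on_leD[OF J_strict] a b_props by auto
  thus ?thesis using J_b2 by (simp add: d2_def)
qed

lemma J_image: "J m c3 ` {B2..B3} = {0..dd}"
proof
  show "J m c3 ` {B2..B3} \<subseteq> {0..dd}" using J_range by auto
  show "{0..dd} \<subseteq> J m c3 ` {B2..B3}" using Jinv by (metis image_eqI subsetI)
qed

lemma Jinv_cont: "continuous_on {0..dd} Jinv"
  using continuous_on_inv[OF J_cont compact_Icc, of Jinv] Jinv_J J_image by auto

lemma Jinv_0: "Jinv 0 = B2" using Jinv_J[of B2] J_b2 b_props by auto
lemma Jinv_d2: "Jinv dd = B3" using Jinv_J[of B3] b_props by (auto simp: d2_def)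

lemma Jinv_open: assumes "y \<in> {0<..<dd}" shows "Jinv y \<in> {B2<..<B3}"
proof -
  have "Jinv y \<in> {B2..B3}" "J m c3 (Jinv y) = y" using Jinv assms by auto
  moreover have "Jinv y \<noteq> B2" using calculation assms J_b2 by auto
  moreover have "Jinv y \<noteq> B3" using calculation assms by (auto simp: d2_def)
  ultimately show ?thesis by auto
qed

lemma Jinv_deriv: assumes y: "y \<in> {0<..<dd}" shows "(Jinv has_real_derivative g (Jinv y)) (at y)"
proof -
  have o: "Jinv y \<in> {B2<..<B3}" by (rule Jinv_open[OF y])
  have "(Jinv has_real_derivative inverse (Jint m c3 (Jinv y))) (at y)"
  proof (rule DERIV_inverse_function[where f = "J m c3" and a = 0 and b = dd])
    show "(J m c3 has_real_derivative Jint m c3 (Jinv y)) (at (Jinv y))" by (rule J_deriv[OF o])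
    show "Jint m c3 (Jinv y) \<noteq> 0" using Jint_pos[OF o] by simp
    show "0 < y" "y < dd" using y by auto
    show "\<And>z. 0 < z \<Longrightarrow> z < dd \<Longrightarrow> J m c3 (Jinv z) = z" using Jinv by auto
    show "isCont Jinv y" using y by (intro continuous_on_interior[OF Jinv_cont]) auto
  qed
  thus ?thesis using Jint_g[OF o] g_pos[OF o] by simp
qed

end



context sett begin

definition "tau c5 x = pi * (x - c5) / dd"
definition "T c5 x = dd / pi * arccos (cos (tau c5 x))"
definition "sg c5 x = sgn (sin (tau c5 x))"
definition "A c5 x = Jinv (T c5 x)"

lemma dd_pos: "dd > 0" by (rule d2_pos)

lemma T_range: "T c5 x \<in> {0..dd}"
proof -
  have "0 \<le> arccos (cos (tau c5 x))" "arccos (cos (tau c5 x)) \<le> pi"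
    by (auto intro!: arccos_lbound arccos_ubound)
  moreover have "dd / pi \<ge> 0" using dd_pos by simp
  ultimately have "0 \<le> dd / pi * arccos (cos (tau c5 x))" "dd / pi * arccos (cos (tau c5 x)) \<le> dd / pi * pi"
    by (auto intro!: mult_left_mono mult_nonneg_nonneg simp del: times_divide_eq_left)
  thus ?thesis by (simp add: T_def)
qed

lemma T_cont: "continuous_on UNIV (T c5)"
  unfolding T_def tau_def using dd_pos by (intro continuous_intros) auto

lemma T_shift: assumes "u \<in> {c5 - dd..c5 + dd}"
  shows "T c5 (u + 2 * real_of_int k * dd) = \<bar>u - c5\<bar>"
proof -
  have "tau c5 (u + 2 * real_of_int k * dd) = tau c5 u + (2*pi) * of_int k"
    using dd_pos by (simp add: tau_def field_simps)
  hence "cos (tau c5 (u + 2 * real_of_int k * dd)) = cos (tau c5 u)"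
    by (simp add: cos_add)
  moreover have ab: "\<bar>tau c5 u\<bar> = pi * \<bar>u - c5\<bar> / dd"
    using dd_pos by (simp add: tau_def abs_mult abs_divide)
  moreover have "\<bar>tau c5 u\<bar> \<le> pi"
  proof -
    have "\<bar>u - c5\<bar> \<le> dd" using assms by auto
    hence "pi * \<bar>u - c5\<bar> \<le> pi * dd" by simp
    thus ?thesis unfolding ab using dd_pos by (simp add: divide_le_eq)
  qed
  ultimately show ?thesis using dd_pos by (simp add: T_def arccos_cos_eq_abs)
qed

lemma T_periodic: "T c5 (x + 2 * dd) = T c5 x"
proof -
  have "tau c5 (x + 2 * dd) = tau c5 x + 2 * pi"
    using dd_pos by (simp add: tau_def field_simps)
  thus ?thesis by (simp add: T_def)
qed

lemma cos_sq: "sin (t::real) \<noteq> 0 \<Longrightarrow> -1 < cos t \<and> cos t < 1"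
proof -
  assume "sin t \<noteq> 0"
  hence "(sin t)^2 > 0" by (simp add: zero_less_power2)
  hence "(cos t)^2 < 1" using sin_cos_squared_add[of t] by linarith
  hence "\<bar>cos t\<bar> < 1" by (simp add: abs_square_less_1)
  thus ?thesis by (simp add: abs_less_iff)
qed

lemma T_open: assumes "sin (tau c5 x) \<noteq> 0" shows "T c5 x \<in> {0<..<dd}"
proof -
  let ?c = "cos (tau c5 x)"
  have c: "-1 < ?c" "?c < 1" using cos_sq[OF assms] by auto
  have "arccos ?c \<noteq> 0" "arccos ?c \<noteq> pi"
    using c arccos_eq_0_iff[of ?c] arccos_eq_pi_iff[of ?c] by auto
  moreover have "0 \<le> arccos ?c" "arccos ?c \<le> pi" using c by (auto intro!: arccos_lbound arccos_ubound)
  ultimately have "0 < arccos ?c" "arccos ?c < pi" by auto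
  moreover have "dd / pi > 0" using dd_pos by simp
  ultimately have "0 < dd / pi * arccos ?c" "dd / pi * arccos ?c < dd / pi * pi"
    by (auto intro!: mult_strict_left_mono mult_pos_pos simp del: times_divide_eq_left)
  thus ?thesis by (simp add: T_def)
qed

lemma T_deriv: assumes "sin (tau c5 x) \<noteq> 0" shows "(T c5 has_real_derivative sg c5 x) (at x)"
proof -
  let ?t = "tau c5 x"
  have c: "-1 < cos ?t" "cos ?t < 1" using cos_sq[OF assms] by auto
  have sq: "sqrt (1 - (cos ?t)^2) = \<bar>sin ?t\<bar>"
  proof -
    have "1 - (cos ?t)^2 = (sin ?t)^2" by (simp add: sin_squared_eq)
    thus ?thesis by simp
  qed
  have d1: "((\<lambda>y. tau c5 y) has_real_derivative pi / dd) (at x)"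
    unfolding tau_def using dd_pos by (auto intro!: derivative_eq_intros)
  have d2: "((\<lambda>y. cos (tau c5 y)) has_real_derivative (- sin ?t * (pi / dd))) (at x)"
    using DERIV_chain2[OF DERIV_cos d1] by simp
  have d3: "((\<lambda>y. arccos (cos (tau c5 y))) has_real_derivative inverse (- sqrt (1 - (cos ?t)^2)) * (- sin ?t * (pi / dd))) (at x)"
    using DERIV_chain2[OF DERIV_arccos[OF c] d2] by simp
  have "(T c5 has_real_derivative dd / pi * (inverse (- sqrt (1 - (cos ?t)^2)) * (- sin ?t * (pi / dd)))) (at x)"
    unfolding T_def using DERIV_cmult[OF d3, of "dd/pi"] by simp
  moreover have "dd / pi * (inverse (- sqrt (1 - (cos ?t)^2)) * (- sin ?t * (pi / dd))) = sg c5 x"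
  proof -
    have "dd / pi * (inverse (- sqrt (1 - (cos ?t)^2)) * (- sin ?t * (pi / dd))) = sin ?t / \<bar>sin ?t\<bar>"
      unfolding sq using dd_pos by (simp add: divide_simps)
    also have "\<dots> = sg c5 x" using assms by (cases "sin ?t > 0") (auto simp: sg_def)
    finally show ?thesis .
  qed
  ultimately show ?thesis by simp
qed

lemma T_turn: assumes "sin (tau c5 x) = 0" shows "T c5 x = 0 \<or> T c5 x = dd"
proof -
  have "cos (tau c5 x) = 1 \<or> cos (tau c5 x) = -1"
    using sin_cos_squared_add[of "tau c5 x"] assms by (simp add: power2_eq_1_iff)
  thus ?thesis using dd_pos by (auto simp: T_def)
qed

lemma turn_isolated: assumes "sin (tau c5 x) = 0" "y \<noteq> x" "\<bar>y - x\<bar> < dd"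
  shows "sin (tau c5 y) \<noteq> 0"
proof -
  define s where "s = pi * (y - x) / dd"
  have ty: "tau c5 y = tau c5 x + s" using dd_pos by (simp add: tau_def s_def field_simps)
  have "cos (tau c5 x) = 1 \<or> cos (tau c5 x) = -1"
    using sin_cos_squared_add[of "tau c5 x"] assms by (simp add: power2_eq_1_iff)
  hence sy: "sin (tau c5 y) = sin s \<or> sin (tau c5 y) = - sin s" using assms(1) by (auto simp: ty sin_add)
  have s0: "s \<noteq> 0" using assms dd_pos by (simp add: s_def)
  have "\<bar>s\<bar> = pi * \<bar>y - x\<bar> / dd" using dd_pos by (simp add: s_def abs_mult abs_divide)
  also have "\<dots> < pi * dd / dd" using assms dd_pos by (intro divide_strict_right_mono) auto
  finally have "\<bar>s\<bar> < pi" using dd_pos by simp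
  hence "sin s \<noteq> 0" using sin_eq_0_pi[of s] s0 by (auto simp: abs_less_iff)
  thus ?thesis using sy by auto
qed

lemma A_range: "A c5 x \<in> {B2..B3}" using Jinv T_range by (simp add: A_def)

lemma A_cont: "continuous_on UNIV (A c5)"
  unfolding A_def using T_range
  by (intro continuous_on_compose2[OF Jinv_cont T_cont]) auto

lemma A_periodic: "A c5 (x + 2 * dd) = A c5 x" by (simp add: A_def T_periodic)

lemma A_open: "sin (tau c5 x) \<noteq> 0 \<Longrightarrow> A c5 x \<in> {B2<..<B3}"
  using Jinv_open T_open by (simp add: A_def)

lemma A_turn: "sin (tau c5 x) = 0 \<Longrightarrow> A c5 x = B2 \<or> A c5 x = B3"
  using T_turn[of c5 x] Jinv_0 Jinv_d2 by (auto simp: A_def)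

lemma A_deriv: assumes "sin (tau c5 x) \<noteq> 0"
  shows "(A c5 has_real_derivative g (A c5 x) * sg c5 x) (at x)"
  unfolding A_def
  using DERIV_chain2[OF Jinv_deriv[OF T_open[OF assms]] T_deriv[OF assms]] by simp

end



lemma mvt_point:
  fixes f f' :: "real \<Rightarrow> real"
  assumes d: "d > 0" and c: "isCont f x"
    and D: "\<And>y. y \<noteq> x \<Longrightarrow> \<bar>y - x\<bar> < d \<Longrightarrow> (f has_real_derivative f' y) (at y)"
    and y: "y \<noteq> x" "\<bar>y - x\<bar> < d"
  shows "\<exists>z. z \<noteq> x \<and> \<bar>z - x\<bar> < \<bar>y - x\<bar> \<and> (f y - f x) / (y - x) = f' z"
proof -
  define a where "a = min x y"
  define b where "b = max x y"
  have ab: "a < b" using y by (auto simp: a_def b_def)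
  have inside: "\<And>z. a < z \<Longrightarrow> z < b \<Longrightarrow> z \<noteq> x \<and> \<bar>z - x\<bar> < \<bar>y - x\<bar>"
    by (auto simp: a_def b_def)
  have cont: "continuous_on {a..b} f"
  proof (intro continuous_at_imp_continuous_on ballI)
    fix z assume z: "z \<in> {a..b}"
    show "isCont f z"
    proof (cases "z = x")
      case True thus ?thesis using c by simp
    next
      case False
      have "\<bar>z - x\<bar> \<le> \<bar>y - x\<bar>" using z by (auto simp: a_def b_def)
      thus ?thesis using D[OF False] y by (auto intro: DERIV_isCont)
    qed
  qed
  have dif: "\<And>z. a < z \<Longrightarrow> z < b \<Longrightarrow> f differentiable (at z)"
    using D inside y by (meson dual_order.strict_trans real_differentiable_def)
  obtain l z where z: "a < z" "z < b" "DERIV f z :> l" "f b - f a = (b - a) * l"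
    using MVT[OF ab cont dif] by blast
  have zz: "z \<noteq> x" "\<bar>z - x\<bar> < \<bar>y - x\<bar>" using inside z by auto
  have "l = f' z" using DERIV_unique[OF z(3) D[OF zz(1)]] zz y by auto
  moreover have "(f y - f x) / (y - x) = l"
  proof (cases "x < y")
    case True thus ?thesis using z(4) by (simp add: a_def b_def field_simps)
  next
    case False thus ?thesis using z(4) y(1) by (simp add: a_def b_def field_simps)
  qed
  ultimately show ?thesis using zz by blast
qed

lemma deriv_limit:
  fixes f f' :: "real \<Rightarrow> real"
  assumes d: "d > 0" and c: "isCont f x"
    and D: "\<And>y. y \<noteq> x \<Longrightarrow> \<bar>y - x\<bar> < d \<Longrightarrow> (f has_real_derivative f' y) (at y)"
    and L: "(f' \<longlongrightarrow> L) (at x)"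
  shows "(f has_real_derivative L) (at x)"
  unfolding has_field_derivative_iff LIM_eq
proof (intro allI impI)
  fix r :: real assume r: "r > 0"
  obtain s where s: "s > 0" "\<And>z. z \<noteq> x \<and> norm (z - x) < s \<longrightarrow> norm (f' z - L) < r"
    using L r unfolding LIM_eq by blast
  show "\<exists>s>0. \<forall>y. y \<noteq> x \<and> norm (y - x) < s \<longrightarrow> norm ((f y - f x) / (y - x) - L) < r"
  proof (intro exI[of _ "min s d"] conjI allI impI)
    show "min s d > 0" using s d by simp
    fix y assume y: "y \<noteq> x \<and> norm (y - x) < min s d"
    obtain z where z: "z \<noteq> x" "\<bar>z - x\<bar> < \<bar>y - x\<bar>" "(f y - f x) / (y - x) = f' z"
      using mvt_point[OF d c D] y by auto
    show "norm ((f y - f x) / (y - x) - L) < r" using s(2)[of z] z y by auto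
  qed
qed




context sett begin

definition "N = 2*m - 1"
definition "Ddp y = real (2*m) * y^(2*m-1) - real (4*m) * y * q y^(2*m-1)"
definition "Ep y = Ddp y / (real (2*m) * E y ^ N)"
definition "gp y = real N * (E y / q y)^(N-1) * ((Ep y * q y - E y * (2*y)) / (q y * q y))"
definition "h y = real N * (E y^(N-1) * Ddp y / real (2*m) - 2*y*E y^(2*N) / q y) / q y^(2*N)"
definition "P y = E y / y"
definition "Pp y = (Ep y * y - E y) / (y*y)"

lemma N_props: "N \<ge> 3" "2*m = Suc N" "2*m - Suc 0 = N" using m2 by (auto simp: N_def)

lemma q_deriv: "(q has_real_derivative 2*y) (at y)"
  unfolding q_def by (auto intro!: derivative_eq_intros)

lemma Dd_deriv: "(Dd has_real_derivative Ddp y) (at y)"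
proof -
  have "((\<lambda>y. y^(2*m) - q y^(2*m)) has_real_derivative real (2*m) * y^(2*m - Suc 0) - real (2*m) * (2*y * q y^(2*m - Suc 0))) (at y)"
    by (rule DERIV_diff[OF DERIV_pow DERIV_power[OF q_deriv]])
  moreover have "Dd = (\<lambda>y. y^(2*m) - q y^(2*m))" by (simp add: Dd_def fun_eq_iff)
  moreover have "real (2*m) * y^(2*m - Suc 0) - real (2*m) * (2*y * q y^(2*m - Suc 0)) = Ddp y"
    by (simp add: Ddp_def)
  ultimately show ?thesis by simp
qed

lemma E_deriv: assumes y: "y \<in> {B2<..<B3}" shows "(E has_real_derivative Ep y) (at y)"
proof -
  have p: "0 < 2*m" "0 < Dd y" using Dd_pos[OF y] m2 by auto
  have "((\<lambda>y. root (2*m) (Dd y)) has_real_derivative inverse (real (2*m) * root (2*m) (Dd y) ^ (2*m - Suc 0)) * Ddp y) (at y)"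
    by (rule DERIV_chain2[OF DERIV_real_root[OF p] Dd_deriv])
  moreover have "E = (\<lambda>y. root (2*m) (Dd y))" by (simp add: E_def fun_eq_iff)
  moreover have "inverse (real (2*m) * root (2*m) (Dd y) ^ (2*m - Suc 0)) * Ddp y = Ep y"
    unfolding Ep_def E_def N_props(3) by (simp only: divide_inverse mult.commute)
  ultimately show ?thesis by simp
qed

lemma g_deriv: assumes y: "y \<in> {B2<..<B3}" shows "(g has_real_derivative gp y) (at y)"
proof -
  have qy: "q y \<noteq> 0" using q_pos[of y] by simp
  have "((\<lambda>y. E y / q y) has_real_derivative (Ep y * q y - E y * (2*y)) / (q y * q y)) (at y)"
    using DERIV_divide[OF E_deriv[OF y] q_deriv qy] .
  from DERIV_power[OF this, of N]
  have "((\<lambda>y. (E y / q y)^N) has_real_derivative real N * (E y / q y)^(N-1) * ((Ep y * q y - E y * (2*y)) / (q y * q y))) (at y)"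
    by (simp only: mult_ac diff_Suc_1 One_nat_def)
  moreover have "g = (\<lambda>y. (E y / q y)^N)" by (simp add: g_def N_def fun_eq_iff)
  ultimately show ?thesis by (simp add: gp_def)
qed

lemma alg_h0:
  fixes e Q y Dp M u w k :: real
  assumes "e > 0" "Q > 0" "M > 0" "u > 0" "w > 0"
  shows "(e*u/(Q*w)) * (k * (u/w) * (((Dp / (M * (e*u))) * Q - e * (2*y)) / (Q*Q)))
       = k * (u * Dp / M - 2*y*((e*u)*(e*u))/Q) / ((Q*w)*(Q*w))"
  using assms by (simp add: field_simps)

lemma alg_h:
  fixes e Q y Dp M :: real and n :: nat
  assumes "e > 0" "Q > 0" "M > 0"
  shows "(e/Q)^Suc n * (real (Suc n) * (e/Q)^n * (((Dp / (M * e^Suc n)) * Q - e * (2*y)) / (Q*Q)))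
       = real (Suc n) * (e^n * Dp / M - 2*y*e^(2*Suc n)/Q) / Q^(2*Suc n)"
proof -
  have p: "e^(2*Suc n) = (e*e^n) * (e*e^n)" "Q^(2*Suc n) = (Q*Q^n) * (Q*Q^n)"
    by (simp_all add: power_add[symmetric] mult_2 del: power_Suc) (simp_all add: power_add)
  have "(e/Q)^Suc n = e*e^n/(Q*Q^n)" "(e/Q)^n = e^n/Q^n" "e^Suc n = e*e^n" by (simp_all add: power_divide)
  thus ?thesis unfolding p using alg_h0[of e Q M "e^n" "Q^n"] assms by simp
qed

lemma g_gp: assumes y: "y \<in> {B2<..<B3}" shows "g y * gp y = h y"
proof -
  obtain n where n: "N = Suc n" using N_props by (cases N) auto
  have "g y * gp y = (E y/q y)^Suc n * (real (Suc n) * (E y/q y)^n * (((Ddp y / (real (2*m) * E y^Suc n)) * q y - E y * (2*y)) / (q y*q y)))"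
  proof -
    have e: "2*m-1 = Suc n" using n by (simp add: N_def)
    show ?thesis unfolding g_def gp_def Ep_def e n by simp
  qed
  also have "\<dots> = h y"
    unfolding h_def n using E_pos[OF y] q_pos[of y] m2
    by (subst alg_h) auto
  finally show ?thesis .
qed

lemma P_deriv: assumes y: "y \<in> {B2<..<B3}" shows "(P has_real_derivative Pp y) (at y)"
proof -
  have "y \<noteq> 0" using y b_props by auto
  from DERIV_divide[OF E_deriv[OF y] DERIV_ident this]
  show ?thesis unfolding P_def Pp_def by (simp add: fun_eq_iff)
qed

lemma alg_P:
  fixes e Q y u w Y Dp M :: real
  assumes "e > 0" "Q > 0" "y > 0" "u > 0" "w > 0" "M > 0"
    and r1: "u * e = Y * y - w * Q" and r2: "Dp = M * Y - 2 * M * y * w"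
  shows "((Dp / (M * u)) * y - e) / (y*y) * (u/w) = (Q - 2*y*y)/(y*y)"
proof -
  have "((Dp / (M * u)) * y - e) / (y*y) * (u/w) = (Dp * y / M - u * e) / (y*y*w)"
    using assms by (simp add: field_simps)
  also have "Dp * y / M = Y * y - 2 * y * y * w" using assms(6) unfolding r2 by (simp add: field_simps)
  also have "(Y * y - 2 * y * y * w - u * e) / (y*y*w) = (Q - 2*y*y)/(y*y)"
    unfolding r1 using assms by (simp add: field_simps)
  finally show ?thesis .
qed

lemma Pp_g: assumes y: "y \<in> {B2<..<B3}" shows "Pp y * g y = c3 / y^2 - 1"
proof -
  have e: "E y > 0" using E_pos[OF y] .
  have Q: "q y > 0" using q_pos .
  have yp: "y > 0" using y b_props by auto
  have EN: "E y ^ (2*m) = y^(2*m) - q y^(2*m)" using E_pow[of y] y by (simp add: Dd_def)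
  have s1: "E y ^ (2*m) = E y ^ N * E y" "y^(2*m) = y^N * y" "q y ^(2*m) = q y^N * q y"
    using N_props by (simp_all add: power_Suc2[symmetric])
  have r1: "E y^N * E y = y^N * y - q y^N * q y" using EN s1 by simp
  have r2: "Ddp y = real (2*m) * y^N - 2 * real (2*m) * y * q y^N"
    by (simp add: Ddp_def N_def)
  have g: "g y = E y^N / q y^N" by (simp add: g_def N_def power_divide)
  have "Pp y * g y = ((Ddp y / (real (2*m) * E y ^ N)) * y - E y) / (y*y) * (E y^N / q y^N)"
    by (simp add: Pp_def Ep_def g)
  also have "\<dots> = (q y - 2*y*y)/(y*y)"
    using alg_P[OF e Q yp _ _ _ r1 r2] e Q m2 by simp
  also have "\<dots> = c3/y^2 - 1" using yp by (simp add: q_def field_simps power2_eq_square)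
  finally show ?thesis .
qed

lemma cont_h: "continuous_on UNIV h"
proof -
  have "continuous_on UNIV q" unfolding q_def by (intro continuous_intros)
  moreover have "continuous_on UNIV Ddp" unfolding Ddp_def q_def by (intro continuous_intros)
  ultimately show ?thesis unfolding h_def using q_pos cont_E m2
    by (intro continuous_intros) (auto simp: less_imp_neq[symmetric])
qed

lemma h_zero: "y = B2 \<or> y = B3 \<Longrightarrow> h y = 0"
proof -
  assume "y = B2 \<or> y = B3"
  hence "E y = 0" using E_zero by auto
  moreover have "N - 1 \<noteq> 0" "2*N \<noteq> 0" using N_props by auto
  ultimately show ?thesis by (simp add: h_def zero_power)
qed

lemma cont_P: "continuous_on {0<..} P"
  unfolding P_def using cont_E by (intro continuous_intros continuous_on_subset[OF cont_E]) auto

lemma P_zero: "y = B2 \<or> y = B3 \<Longrightarrow> P y = 0"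
  using E_zero[of y] by (auto simp: P_def)

end



context sett begin

definition "a1 c5 x = g (A c5 x) * sg c5 x"
definition "a2 c5 x = h (A c5 x)"
definition "Zf c5 x = sg c5 x * P (A c5 x)"
definition "Zp c5 x = c3 / (A c5 x)^2 - 1"
definition "Rf c5 x = q (A c5 x) / A c5 x"

lemma A_pos: "A c5 x > 0" using A_range[of c5 x] b_props by auto

lemma sg_turn: "sin (tau c5 x) = 0 \<Longrightarrow> sg c5 x = 0" by (simp add: sg_def)
lemma sg_sq: "sin (tau c5 x) \<noteq> 0 \<Longrightarrow> sg c5 x * sg c5 x = 1"
  by (cases "sin (tau c5 x) > 0") (auto simp: sg_def)
lemma abs_sg: "\<bar>sg c5 x\<bar> \<le> 1" by (simp add: sg_def sgn_real_def)

lemma sg_local: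
  assumes "sin (tau c5 x) \<noteq> 0"
  shows "\<exists>S. open S \<and> x \<in> S \<and> (\<forall>z\<in>S. sg c5 z = sg c5 x \<and> sin (tau c5 z) \<noteq> 0)"
proof -
  let ?S = "{z. 0 < sin (tau c5 z) * sin (tau c5 x)}"
  have "open ?S" unfolding tau_def
    using dd_pos by (intro open_Collect_less continuous_intros) auto
  moreover have "x \<in> ?S" using assms not_real_square_gt_zero by blast
  moreover have "\<forall>z\<in>?S. sg c5 z = sg c5 x \<and> sin (tau c5 z) \<noteq> 0"
    by (auto simp: sg_def zero_less_mult_iff)
  ultimately show ?thesis by blast
qed

lemma cont_gA: "isCont (\<lambda>y. g (A c5 y)) x"
  using continuous_on_compose2[OF cont_g A_cont[of c5]]
  by (simp add: continuous_on_eq_continuous_at)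

lemma cont_hA: "isCont (\<lambda>y. h (A c5 y)) x"
  using continuous_on_compose2[OF cont_h A_cont[of c5]]
  by (simp add: continuous_on_eq_continuous_at)

lemma cont_PA: "isCont (\<lambda>y. P (A c5 y)) x"
  using continuous_on_compose2[OF cont_P A_cont[of c5]] A_pos
  by (auto simp: continuous_on_eq_continuous_at)

lemma cont_ZpA: "isCont (Zp c5) x"
proof -
  have "continuous_on UNIV (Zp c5)" unfolding Zp_def using A_pos
    by (intro continuous_intros A_cont) (auto simp: less_imp_neq[symmetric])
  thus ?thesis by (simp add: continuous_on_eq_continuous_at)
qed

lemma sg_null:
  assumes "isCont F x" "F x = 0"
  shows "((\<lambda>y. sg c5 y * F y) \<longlongrightarrow> 0) (at x)"
proof (rule Lim_null_comparison)
  show "eventually (\<lambda>y. norm (sg c5 y * F y) \<le> \<bar>F y\<bar>) (at x)"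
    using abs_sg by (auto intro!: always_eventually simp: abs_mult mult_left_le_one_le)
  have "((\<lambda>y. \<bar>F y\<bar>) \<longlongrightarrow> \<bar>F x\<bar>) (at x)"
    using assms(1) by (intro tendsto_rabs) (simp add: isCont_def)
  thus "((\<lambda>y. \<bar>F y\<bar>) \<longlongrightarrow> 0) (at x)" using assms(2) by simp
qed

lemma turn_gA: "sin (tau c5 x) = 0 \<Longrightarrow> g (A c5 x) = 0"
  using A_turn g_zero by blast

lemma a1_fun: "a1 c5 = (\<lambda>y. sg c5 y * g (A c5 y))" by (simp add: a1_def fun_eq_iff mult.commute)
lemma Zf_fun: "Zf c5 = (\<lambda>y. sg c5 y * P (A c5 y))" by (simp add: Zf_def fun_eq_iff)

lemma A_has_deriv: "(A c5 has_real_derivative a1 c5 x) (at x)"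
proof (cases "sin (tau c5 x) = 0")
  case False thus ?thesis using A_deriv by (simp add: a1_def)
next
  case True
  have a1x: "a1 c5 x = 0" using sg_turn[OF True] by (simp add: a1_def)
  show ?thesis unfolding a1x
  proof (rule deriv_limit[OF dd_pos])
    show "isCont (A c5) x" using A_cont by (simp add: continuous_on_eq_continuous_at)
    fix y assume "y \<noteq> x" "\<bar>y - x\<bar> < dd"
    hence "sin (tau c5 y) \<noteq> 0" using turn_isolated True by auto
    thus "(A c5 has_real_derivative a1 c5 y) (at y)" using A_deriv by (simp add: a1_def)
  next
    have "((\<lambda>y. sg c5 y * g (A c5 y)) \<longlongrightarrow> 0) (at x)"
      by (rule sg_null[OF cont_gA turn_gA[OF True]])
    thus "(a1 c5 \<longlongrightarrow> 0) (at x)" by (simp add: a1_fun)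
  qed
qed

lemma a1_at_open:
  assumes "sin (tau c5 x) \<noteq> 0"
  shows "(a1 c5 has_real_derivative a2 c5 x) (at x)"
proof -
  obtain S where S: "open S" "x \<in> S" "\<forall>z\<in>S. sg c5 z = sg c5 x \<and> sin (tau c5 z) \<noteq> 0"
    using sg_local[OF assms] by blast
  have o: "A c5 x \<in> {B2<..<B3}" using A_open[OF assms] .
  have "((\<lambda>y. g (A c5 y) * sg c5 x) has_real_derivative gp (A c5 x) * a1 c5 x * sg c5 x) (at x)"
    using DERIV_cmult_right[OF DERIV_chain2[OF g_deriv[OF o] A_has_deriv]] by simp
  moreover have "gp (A c5 x) * a1 c5 x * sg c5 x = a2 c5 x"
  proof -
    have "gp (A c5 x) * a1 c5 x * sg c5 x = g (A c5 x) * gp (A c5 x) * (sg c5 x * sg c5 x)"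
      by (simp add: a1_def)
    thus ?thesis using sg_sq[OF assms] g_gp[OF o] by (simp add: a2_def)
  qed
  ultimately have "((\<lambda>y. g (A c5 y) * sg c5 x) has_real_derivative a2 c5 x) (at x)" by simp
  thus ?thesis
    by (rule has_field_derivative_transform_within_open[OF _ S(1,2)]) (use S(3) in \<open>simp add: a1_def\<close>)
qed

lemma a1_has_deriv: "(a1 c5 has_real_derivative a2 c5 x) (at x)"
proof (cases "sin (tau c5 x) = 0")
  case False thus ?thesis by (rule a1_at_open)
next
  case True
  show ?thesis
  proof (rule deriv_limit[OF dd_pos])
    have "((\<lambda>y. sg c5 y * g (A c5 y)) \<longlongrightarrow> 0) (at x)"
      by (rule sg_null[OF cont_gA turn_gA[OF True]])
    moreover have "sg c5 x * g (A c5 x) = 0" using sg_turn[OF True] by simp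
    ultimately show "isCont (a1 c5) x" unfolding isCont_def a1_fun by metis
    fix y assume "y \<noteq> x" "\<bar>y - x\<bar> < dd"
    hence "sin (tau c5 y) \<noteq> 0" using turn_isolated True by auto
    thus "(a1 c5 has_real_derivative a2 c5 y) (at y)" by (rule a1_at_open)
  next
    have "a2 c5 = (\<lambda>y. h (A c5 y))" by (simp add: a2_def fun_eq_iff)
    thus "(a2 c5 \<longlongrightarrow> a2 c5 x) (at x)" using cont_hA by (simp add: isCont_def)
  qed
qed

lemma a2_cont: "continuous_on UNIV (a2 c5)"
proof -
  have "a2 c5 = (\<lambda>y. h (A c5 y))" by (simp add: a2_def fun_eq_iff)
  thus ?thesis using cont_hA by (simp add: continuous_on_eq_continuous_at)
qed

lemma Z_at_open:
  assumes "sin (tau c5 x) \<noteq> 0"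
  shows "(Zf c5 has_real_derivative Zp c5 x) (at x)"
proof -
  obtain S where S: "open S" "x \<in> S" "\<forall>z\<in>S. sg c5 z = sg c5 x \<and> sin (tau c5 z) \<noteq> 0"
    using sg_local[OF assms] by blast
  have o: "A c5 x \<in> {B2<..<B3}" using A_open[OF assms] .
  have "((\<lambda>y. sg c5 x * P (A c5 y)) has_real_derivative sg c5 x * (Pp (A c5 x) * a1 c5 x)) (at x)"
    using DERIV_cmult[OF DERIV_chain2[OF P_deriv[OF o] A_has_deriv]] by simp
  moreover have "sg c5 x * (Pp (A c5 x) * a1 c5 x) = Zp c5 x"
  proof -
    have "sg c5 x * (Pp (A c5 x) * a1 c5 x) = Pp (A c5 x) * g (A c5 x) * (sg c5 x * sg c5 x)"
      by (simp add: a1_def)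
    thus ?thesis using sg_sq[OF assms] Pp_g[OF o] by (simp add: Zp_def)
  qed
  ultimately have "((\<lambda>y. sg c5 x * P (A c5 y)) has_real_derivative Zp c5 x) (at x)" by simp
  thus ?thesis
    by (rule has_field_derivative_transform_within_open[OF _ S(1,2)]) (use S(3) in \<open>simp add: Zf_def\<close>)
qed

lemma Z_has_deriv: "(Zf c5 has_real_derivative Zp c5 x) (at x)"
proof (cases "sin (tau c5 x) = 0")
  case False thus ?thesis by (rule Z_at_open)
next
  case True
  show ?thesis
  proof (rule deriv_limit[OF dd_pos])
    have "((\<lambda>y. sg c5 y * P (A c5 y)) \<longlongrightarrow> 0) (at x)"
      by (rule sg_null[OF cont_PA]) (use A_turn[OF True] P_zero in blast)
    moreover have "sg c5 x * P (A c5 x) = 0" using sg_turn[OF True] by simp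
    ultimately show "isCont (Zf c5) x" unfolding isCont_def Zf_fun by metis
    fix y assume "y \<noteq> x" "\<bar>y - x\<bar> < dd"
    hence "sin (tau c5 y) \<noteq> 0" using turn_isolated True by auto
    thus "(Zf c5 has_real_derivative Zp c5 y) (at y)" by (rule Z_at_open)
  next
    show "(Zp c5 \<longlongrightarrow> Zp c5 x) (at x)" using cont_ZpA by (simp add: isCont_def)
  qed
qed

lemma R_has_deriv: "(Rf c5 has_real_derivative (1 - c3 / (A c5 x)^2) * a1 c5 x) (at x)"
proof -
  have ax: "A c5 x \<noteq> 0" using A_pos[of c5 x] by simp
  have "((\<lambda>y. q (A c5 y) / A c5 y) has_real_derivative
      (2 * A c5 x * a1 c5 x * A c5 x - q (A c5 x) * a1 c5 x) / (A c5 x * A c5 x)) (at x)"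
    using DERIV_divide[OF DERIV_chain2[OF q_deriv A_has_deriv] A_has_deriv ax] by (simp add: mult_ac)
  moreover have "(2 * A c5 x * a1 c5 x * A c5 x - q (A c5 x) * a1 c5 x) / (A c5 x * A c5 x)
      = (1 - c3 / (A c5 x)^2) * a1 c5 x"
    using ax by (simp add: q_def field_simps power2_eq_square)
  ultimately show ?thesis by (simp add: Rf_def[abs_def])
qed

end



lemma v3_eq: "(vector [x, y, z] :: real^3) = x *\<^sub>R axis 1 1 + y *\<^sub>R axis 2 1 + z *\<^sub>R axis 3 1"
  by (simp add: vec_eq_iff forall_3 axis_def)

lemma v3_deriv:
  assumes "(f1 has_derivative f1') F" "(f2 has_derivative f2') F" "(f3 has_derivative f3') F"
  shows "((\<lambda>p. vector [f1 p, f2 p, f3 p] :: real^3) has_derivative (\<lambda>h. vector [f1' h, f2' h, f3' h])) F"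
  unfolding v3_eq
  by (intro has_derivative_add has_derivative_scaleR_left assms)

lemma v3_vderiv:
  assumes "(f1 has_real_derivative e1) F" "(f2 has_real_derivative e2) F" "(f3 has_real_derivative e3) F"
  shows "((\<lambda>p. vector [f1 p, f2 p, f3 p] :: real^3) has_vector_derivative vector [e1, e2, e3]) F"
proof -
  have "((\<lambda>p. vector [f1 p, f2 p, f3 p] :: real^3) has_derivative (\<lambda>h. vector [e1 * h, e2 * h, e3 * h])) F"
    using assms by (intro v3_deriv) (auto simp: has_field_derivative_def)
  moreover have "(\<lambda>h. vector [e1 * h, e2 * h, e3 * h] :: real^3) = (\<lambda>h. h *\<^sub>R vector [e1, e2, e3])"
    by (simp add: fun_eq_iff vec_eq_iff forall_3)
  ultimately show ?thesis by (simp add: has_vector_derivative_def)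
qed

lemma vec_nth_deriv[derivative_intros]: "((\<lambda>x. x $ i) has_derivative (\<lambda>h. h $ i)) F"
  by (rule bounded_linear_imp_has_derivative) (rule bounded_linear_vec_nth)

definition gradPhi :: "nat \<Rightarrow> real^3 \<Rightarrow> real^3" where
  "gradPhi m x = vector [real (2*m) * ((x$1)^2 + (x$2)^2)^(m-1) * x$1,
                         real (2*m) * ((x$1)^2 + (x$2)^2)^(m-1) * x$2,
                         real (2*m) * (x$3)^(2*m-1)]"

lemma Phi_gderiv: "GDERIV (Phi m) x :> gradPhi m x"
proof -
  have e: "Phi m = (\<lambda>x. ((x$1)^2 + (x$2)^2)^m + (x$3)^(2*m))" by (simp add: Phi_def fun_eq_iff)
  show ?thesis unfolding gderiv_def e
    by (auto intro!: derivative_eq_intros simp: gradPhi_def inner_vec_def sum_3 fun_eq_iff algebra_simps)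
qed




context sett begin

definition "Rd c5 u = (1 - c3 / (A c5 u)^2) * a1 c5 u"
definition "eta c5 p = (vector [- (Rf c5 (fst p) * cos (snd p)), - (Rf c5 (fst p) * sin (snd p)), Zf c5 (fst p)] :: real^3)"

lemma fu_vec: "pd_u (rot_surf (A c5)) p = vector [a1 c5 (fst p) * cos (snd p), a1 c5 (fst p) * sin (snd p), 1]"
proof -
  obtain u v where p: "p = (u, v)" by (cases p)
  have "((\<lambda>u. vector [A c5 u * cos v, A c5 u * sin v, u] :: real^3) has_vector_derivative
          vector [a1 c5 u * cos v, a1 c5 u * sin v, 1]) (at u)"
    by (intro v3_vderiv DERIV_cmult_right A_has_deriv DERIV_ident)
  thus ?thesis unfolding pd_u_def p rot_surf_def by (simp add: vector_derivative_at)
qed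

lemma fv_vec: assumes "p \<in> pdom"
  shows "pd_v (rot_surf (A c5)) p = vector [- (A c5 (fst p) * sin (snd p)), A c5 (fst p) * cos (snd p), 0]"
proof -
  obtain u v where p: "p = (u, v)" by (cases p)
  have v: "0 \<le> v" "v \<le> 2*pi" using assms by (auto simp: pdom_def p)
  have "((\<lambda>v. vector [A c5 u * cos v, A c5 u * sin v, u] :: real^3) has_vector_derivative
          vector [A c5 u * - sin v, A c5 u * cos v, 0]) (at v)"
    by (intro v3_vderiv DERIV_cmult DERIV_cos DERIV_sin DERIV_const)
  hence "vector_derivative (\<lambda>v. vector [A c5 u * cos v, A c5 u * sin v, u] :: real^3) (at v within {0..2*pi})
       = vector [A c5 u * - sin v, A c5 u * cos v, 0]"
    using v by (intro vector_derivative_at_within_ivl) auto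
  thus ?thesis unfolding pd_v_def p rot_surf_def by simp
qed

lemma etau_vec: "pd_u (eta c5) p = vector [- (Rd c5 (fst p) * cos (snd p)), - (Rd c5 (fst p) * sin (snd p)), Zp c5 (fst p)]"
proof -
  obtain u v where p: "p = (u, v)" by (cases p)
  have "((\<lambda>u. vector [- (Rf c5 u * cos v), - (Rf c5 u * sin v), Zf c5 u] :: real^3) has_vector_derivative
          vector [- (Rd c5 u * cos v), - (Rd c5 u * sin v), Zp c5 u]) (at u)"
    unfolding Rd_def
    by (intro v3_vderiv DERIV_minus DERIV_cmult_right R_has_deriv Z_has_deriv)
  thus ?thesis unfolding pd_u_def p eta_def by (simp add: vector_derivative_at)
qed

lemma etav_vec: assumes "p \<in> pdom"
  shows "pd_v (eta c5) p = vector [- (Rf c5 (fst p) * - sin (snd p)), - (Rf c5 (fst p) * cos (snd p)), 0]"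
proof -
  obtain u v where p: "p = (u, v)" by (cases p)
  have v: "0 \<le> v" "v \<le> 2*pi" using assms by (auto simp: pdom_def p)
  have "((\<lambda>v. vector [- (Rf c5 u * cos v), - (Rf c5 u * sin v), Zf c5 u] :: real^3) has_vector_derivative
          vector [- (Rf c5 u * - sin v), - (Rf c5 u * cos v), 0]) (at v)"
    by (intro v3_vderiv DERIV_minus DERIV_cmult DERIV_cos DERIV_sin DERIV_const)
  hence "vector_derivative (\<lambda>v. vector [- (Rf c5 u * cos v), - (Rf c5 u * sin v), Zf c5 u] :: real^3) (at v within {0..2*pi})
       = vector [- (Rf c5 u * - sin v), - (Rf c5 u * cos v), 0]"
    using v by (intro vector_derivative_at_within_ivl) auto
  thus ?thesis unfolding pd_v_def p eta_def by simp
qed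

lemma sg_cases: "sg c5 x = 0 \<and> sin (tau c5 x) = 0 \<or> sg c5 x = 1 \<and> sin (tau c5 x) \<noteq> 0 \<or> sg c5 x = -1 \<and> sin (tau c5 x) \<noteq> 0"
  by (auto simp: sg_def sgn_real_def)

lemma RZ2: "Zf c5 x ^ (2*m-1) = Rf c5 x ^ (2*m-1) * a1 c5 x"
proof -
  let ?a = "A c5 x"
  have a: "?a > 0" by (rule A_pos)
  have Q: "q ?a > 0" by (rule q_pos)
  have odd: "odd (2*m-1)" using m2 by simp
  have sN: "sg c5 x ^ (2*m-1) = sg c5 x"
    using sg_cases[of c5 x] odd m2 by (auto simp: power_minus_odd)
  have "Zf c5 x ^ (2*m-1) = sg c5 x * (E ?a ^ (2*m-1) / ?a ^ (2*m-1))"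
    unfolding Zf_def P_def power_mult_distrib power_divide sN ..
  also have "\<dots> = (q ?a / ?a)^(2*m-1) * ((E ?a / q ?a)^(2*m-1) * sg c5 x)"
    using a Q by (simp add: power_divide field_simps)
  finally show ?thesis by (simp add: Rf_def a1_def g_def)
qed

lemma RZ1: "Rf c5 x ^ (2*m) + Zf c5 x ^ (2*m) = 1"
proof -
  let ?a = "A c5 x"
  have a: "?a > 0" by (rule A_pos)
  show ?thesis
  proof (cases "sin (tau c5 x) = 0")
    case True
    have "q ?a = ?a" using q_eq A_turn[OF True] by blast
    thus ?thesis using a sg_turn[OF True] m2 by (simp add: Rf_def Zf_def)
  next
    case False
    have s: "sg c5 x ^ (2*m) = 1"
      using sg_sq[OF False] by (simp add: power_mult power2_eq_square)
    have e: "E ?a ^ (2*m) = ?a^(2*m) - q ?a ^ (2*m)"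
      using E_pow[OF A_range] by (simp add: Dd_def)
    have "Rf c5 x ^ (2*m) + Zf c5 x ^ (2*m) = (q ?a ^ (2*m) + E ?a ^ (2*m)) / ?a^(2*m)"
      using a by (simp add: Rf_def Zf_def P_def power_mult_distrib power_divide s add_divide_distrib)
    also have "\<dots> = 1" using a by (simp add: e)
    finally show ?thesis .
  qed
qed

lemma Phi_eta: "Phi m (eta c5 p) = 1"
proof -
  have e1: "(eta c5 p $ 1)^2 = (Rf c5 (fst p))^2 * (cos (snd p))^2" by (simp add: eta_def power_mult_distrib)
  have e2: "(eta c5 p $ 2)^2 = (Rf c5 (fst p))^2 * (sin (snd p))^2" by (simp add: eta_def power_mult_distrib)
  have "(eta c5 p $ 1)^2 + (eta c5 p $ 2)^2 = (Rf c5 (fst p))^2"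
    unfolding e1 e2 by (metis distrib_left mult_1_right sin_cos_squared_add2)
  hence eq: "(eta c5 p $ 1)^2 + (eta c5 p $ 2)^2 = (Rf c5 (fst p))^2" .
  have "Phi m (eta c5 p) = ((eta c5 p $ 1)^2 + (eta c5 p $ 2)^2)^m + (eta c5 p $ 3)^(2*m)"
    by (simp add: Phi_def)
  also have "\<dots> = ((Rf c5 (fst p))^2)^m + Zf c5 (fst p) ^ (2*m)"
    unfolding eq by (simp add: eta_def)
  also have "\<dots> = Rf c5 (fst p) ^ (2*m) + Zf c5 (fst p) ^ (2*m)"
    by (simp add: power_mult)
  finally show ?thesis using RZ1 by simp
qed

end



lemma comp_fst: assumes "(F has_real_derivative F') (at (fst p))" shows "((\<lambda>p. F (fst p)) has_derivative (\<lambda>h. fst h * F')) (at p)"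
  using DERIV_compose_FDERIV[OF assms has_derivative_fst[OF has_derivative_ident]] by simp

lemma comp_snd: assumes "(F has_real_derivative F') (at (snd p))" shows "((\<lambda>p. F (snd p)) has_derivative (\<lambda>h. snd h * F')) (at p)"
  using DERIV_compose_FDERIV[OF assms has_derivative_snd[OF has_derivative_ident]] by simp

lemma cross_f:
  assumes "(cs::real)^2 + sn^2 = 1"
  shows "cross3 (vector [b * cs, b * sn, 1]) (vector [- (a * sn), a * cs, 0]) = (vector [- (a * cs), - (a * sn), a * b] :: real^3)"
proof -
  have "b * cs * (a * cs) + b * sn * (a * sn) = a * b * (cs^2 + sn^2)" by (simp add: power2_eq_square algebra_simps)
  thus ?thesis using assms by (simp add: cross3_simps)
qed

context sett begin

lemma eta12: "(eta c5 p $ 1)^2 + (eta c5 p $ 2)^2 = (Rf c5 (fst p))^2"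
proof -
  have e1: "(eta c5 p $ 1)^2 = (Rf c5 (fst p))^2 * (cos (snd p))^2" by (simp add: eta_def power_mult_distrib)
  have e2: "(eta c5 p $ 2)^2 = (Rf c5 (fst p))^2 * (sin (snd p))^2" by (simp add: eta_def power_mult_distrib)
  show ?thesis unfolding e1 e2 by (metis distrib_left mult_1_right sin_cos_squared_add2)
qed

lemma pw_R: "((r::real)^2)^(m-1) * r = r^(2*m-1)"
proof -
  have "2*m-1 = Suc (2*(m-1))" using m2 by auto
  thus ?thesis by (simp add: power_mult mult.commute)
qed

lemma grad_eq: assumes "p \<in> pdom"
  shows "gradPhi m (eta c5 p) = (real (2*m) * Rf c5 (fst p) ^ (2*m-1) / A c5 (fst p)) *\<^sub>R
           cross3 (pd_u (rot_surf (A c5)) p) (pd_v (rot_surf (A c5)) p)"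
proof -
  let ?u = "fst p" and ?v = "snd p"
  have a: "A c5 ?u > 0" by (rule A_pos)
  have cr: "cross3 (pd_u (rot_surf (A c5)) p) (pd_v (rot_surf (A c5)) p)
     = vector [- (A c5 ?u * cos ?v), - (A c5 ?u * sin ?v), A c5 ?u * a1 c5 ?u]"
    unfolding fu_vec fv_vec[OF assms] by (rule cross_f) simp
  have g: "gradPhi m (eta c5 p) = vector [real (2*m) * ((Rf c5 ?u)^2)^(m-1) * (- (Rf c5 ?u * cos ?v)),
        real (2*m) * ((Rf c5 ?u)^2)^(m-1) * (- (Rf c5 ?u * sin ?v)), real (2*m) * (Zf c5 ?u)^(2*m-1)]"
    unfolding gradPhi_def eta12 by (simp add: eta_def)
  show ?thesis unfolding g cr
    using a pw_R[of "Rf c5 ?u"] RZ2[of c5 ?u]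
    by (simp add: vec_eq_iff forall_3 field_simps)
qed

definition "Dm c5 p k = (vector [- (Rf c5 (fst p) * (snd k * - sin (snd p)) + fst k * Rd c5 (fst p) * cos (snd p)),
   - (Rf c5 (fst p) * (snd k * cos (snd p)) + fst k * Rd c5 (fst p) * sin (snd p)),
   fst k * Zp c5 (fst p)] :: real^3)"

lemma Rd_deriv: "(Rf c5 has_real_derivative Rd c5 x) (at x)"
  unfolding Rd_def by (rule R_has_deriv)

lemma eta_deriv: "(eta c5 has_derivative Dm c5 p) (at p)"
proof -
  have "((\<lambda>p. vector [- (Rf c5 (fst p) * cos (snd p)), - (Rf c5 (fst p) * sin (snd p)), Zf c5 (fst p)] :: real^3)
      has_derivative Dm c5 p) (at p)"
    unfolding Dm_def
    by (intro v3_deriv has_derivative_minus has_derivative_mult comp_fst comp_snd Rd_deriv Z_has_deriv DERIV_cos DERIV_sin)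
  moreover have "eta c5 = (\<lambda>p. vector [- (Rf c5 (fst p) * cos (snd p)), - (Rf c5 (fst p) * sin (snd p)), Zf c5 (fst p)])"
    by (simp add: eta_def fun_eq_iff)
  ultimately show ?thesis by simp
qed

lemma cont_Rf: "continuous_on UNIV (Rf c5)"
  using Rd_deriv DERIV_isCont by (blast intro: continuous_at_imp_continuous_on)
lemma cont_Rd: "continuous_on UNIV (Rd c5)"
proof -
  have "continuous_on UNIV (a1 c5)" using a1_has_deriv DERIV_isCont by (blast intro: continuous_at_imp_continuous_on)
  thus ?thesis unfolding Rd_def[abs_def] using A_pos
    by (intro continuous_intros A_cont) (auto simp: less_imp_neq[symmetric])
qed
lemma cont_Zp: "continuous_on UNIV (Zp c5)"
  using cont_ZpA by (blast intro: continuous_at_imp_continuous_on)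

lemma C1_eta: "C1_on_dom (eta c5)"
  unfolding C1_on_dom_def
proof (intro exI[of _ "Dm c5"] conjI allI ballI)
  fix p assume "p \<in> pdom"
  show "(eta c5 has_derivative Dm c5 p) (at p within pdom)"
    using eta_deriv has_derivative_at_withinI by blast
next
  fix k :: "real \<times> real"
  have c1: "continuous_on pdom (\<lambda>p. Rf c5 (fst p))"
    by (rule continuous_on_compose2[OF cont_Rf continuous_on_fst[OF continuous_on_id]]) auto
  have c2: "continuous_on pdom (\<lambda>p. Rd c5 (fst p))"
    by (rule continuous_on_compose2[OF cont_Rd continuous_on_fst[OF continuous_on_id]]) auto
  have c3': "continuous_on pdom (\<lambda>p. Zp c5 (fst p))"
    by (rule continuous_on_compose2[OF cont_Zp continuous_on_fst[OF continuous_on_id]]) auto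
  show "continuous_on pdom (\<lambda>p. Dm c5 p k)"
    unfolding Dm_def v3_eq
    by (intro continuous_intros c1 c2 c3')
qed

lemma mink: assumes "p \<in> pdom" shows "mink_mean_curv_at (rot_surf (A c5)) (eta c5) p (-1)"
proof -
  have a: "A c5 (fst p) \<noteq> 0" using A_pos[of c5 "fst p"] by simp
  have e1: "pd_u (eta c5) p = Zp c5 (fst p) *\<^sub>R pd_u (rot_surf (A c5)) p + 0 *\<^sub>R pd_v (rot_surf (A c5)) p"
    unfolding etau_vec fu_vec fv_vec[OF assms]
    by (simp add: vec_eq_iff forall_3 Rd_def Zp_def algebra_simps)
  have e2: "pd_v (eta c5) p = 0 *\<^sub>R pd_u (rot_surf (A c5)) p + (- Rf c5 (fst p) / A c5 (fst p)) *\<^sub>R pd_v (rot_surf (A c5)) p"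
    unfolding etav_vec[OF assms] fu_vec fv_vec[OF assms]
    using a by (simp add: vec_eq_iff forall_3 field_simps)
  have e3: "- 1 = (Zp c5 (fst p) + - Rf c5 (fst p) / A c5 (fst p)) / 2"
    using a by (simp add: Zp_def Rf_def q_def field_simps power2_eq_square)
  show ?thesis unfolding mink_mean_curv_at_def using e1 e2 e3 by blast
qed

end



context sett begin

lemma alpha_hat_eq: "alpha_hat m c3 c5 u = Jinv \<bar>u - c5\<bar>"
  by (simp add: alpha_hat_def Jinv_def)

lemma A_is_alpha_star: "is_alpha_star m c3 c5 (A c5)"
  unfolding is_alpha_star_def
  by (auto simp: A_def T_shift alpha_hat_eq)

lemma alpha_star_eq: assumes "is_alpha_star m c3 c5 a" shows "a = A c5"
proof
  fix x
  define k where "k = \<lfloor>(x - c5 + dd) / (2*dd)\<rfloor>"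
  define u where "u = x - 2 * real_of_int k * dd"
  have k1: "real_of_int k \<le> (x - c5 + dd) / (2*dd)" unfolding k_def by (rule of_int_floor_le)
  have k2: "(x - c5 + dd) / (2*dd) < real_of_int k + 1" unfolding k_def by linarith
  have p: "2*dd > 0" using dd_pos by simp
  have "real_of_int k * (2*dd) \<le> x - c5 + dd" using k1 p by (simp add: le_divide_eq)
  moreover have "x - c5 + dd < (real_of_int k + 1) * (2*dd)" using k2 p by (simp add: divide_less_eq)
  ultimately have u: "u \<in> {c5 - dd..c5 + dd}" by (auto simp: u_def algebra_simps)
  have x: "x = u + 2 * real_of_int k * dd" by (simp add: u_def)
  have "a x = alpha_hat m c3 c5 u" using assms u unfolding is_alpha_star_def x by blast
  also have "\<dots> = A c5 x" unfolding x A_def T_shift[OF u] alpha_hat_eq ..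
  finally show "a x = A c5 x" .
qed

lemma A_C2: "C2_real (A c5)"
proof -
  have d1: "deriv (A c5) = a1 c5" using A_has_deriv DERIV_imp_deriv by blast
  have d2': "deriv (a1 c5) = a2 c5" using a1_has_deriv DERIV_imp_deriv by blast
  show ?thesis unfolding C2_real_def d1 d2'
    using A_has_deriv a1_has_deriv a2_cont real_differentiable_def by blast
qed

lemma BG: "is_BG_map m (rot_surf (A c5)) (eta c5)"
  unfolding is_BG_map_def
proof (intro ballI conjI)
  fix p assume p: "p \<in> pdom"
  show "Phi m (eta c5 p) = 1" by (rule Phi_eta)
  have "Rf c5 (fst p) > 0" using A_pos q_pos by (simp add: Rf_def)
  hence "real (2*m) * Rf c5 (fst p) ^ (2*m-1) / A c5 (fst p) > 0" using A_pos m2 by simp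
  moreover have "GDERIV (Phi m) (eta c5 p) :> (real (2*m) * Rf c5 (fst p) ^ (2*m-1) / A c5 (fst p)) *\<^sub>R
           cross3 (pd_u (rot_surf (A c5)) p) (pd_v (rot_surf (A c5)) p)"
    using Phi_gderiv[of m "eta c5 p"] grad_eq[OF p] by simp
  ultimately show "\<exists>\<mu>>0. GDERIV (Phi m) (eta c5 p) :> \<mu> *\<^sub>R cross3 (pd_u (rot_surf (A c5)) p) (pd_v (rot_surf (A c5)) p)"
    by blast
qed

end

theorem theorem6p2:
  fixes m :: nat and c3 c5 :: real
  assumes "m \<ge> 2" and "0 < c3" and "c3 < 1/4"
  shows "(\<forall>\<alpha> \<in> {b2 c3..b3 c3}. Jint m c3 integrable_on {b2 c3..\<alpha>})
    \<and> strict_mono_on {b2 c3..b3 c3} (J m c3)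
    \<and> d2 m c3 > 0
    \<and> (\<forall>u \<in> {c5 - d2 m c3..c5 + d2 m c3}.
          \<exists>!\<alpha>. \<alpha> \<in> {b2 c3..b3 c3} \<and> J m c3 \<alpha> = \<bar>u - c5\<bar>)
    \<and> (\<exists>a. is_alpha_star m c3 c5 a)
    \<and> (\<forall>a. is_alpha_star m c3 c5 a \<longrightarrow>
          (\<forall>x. a x \<in> {b2 c3..b3 c3})
        \<and> (\<forall>x. a (x + 2 * d2 m c3) = a x)
        \<and> C2_real a
        \<and> (\<exists>\<eta>. is_BG_map m (rot_surf a) \<eta> \<and> C1_on_dom \<eta>
              \<and> (\<forall>p \<in> pdom. mink_mean_curv_at (rot_surf a) \<eta> p (-1))))"
proof -
  interpret sett m c3 using assms by unfold_locales auto
  have P5: "\<forall>u \<in> {c5 - d2 m c3..c5 + d2 m c3}. \<exists>!\<alpha>. \<alpha> \<in> {b2 c3..b3 c3} \<and> J m c3 \<alpha> = \<bar>u - c5\<bar>"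
  proof
    fix u assume "u \<in> {c5 - d2 m c3..c5 + d2 m c3}"
    hence "\<bar>u - c5\<bar> \<in> {0..dd}" by auto
    thus "\<exists>!\<alpha>. \<alpha> \<in> {b2 c3..b3 c3} \<and> J m c3 \<alpha> = \<bar>u - c5\<bar>" by (rule J_ex1)
  qed
  have P7: "\<forall>a. is_alpha_star m c3 c5 a \<longrightarrow>
          (\<forall>x. a x \<in> {b2 c3..b3 c3})
        \<and> (\<forall>x. a (x + 2 * d2 m c3) = a x)
        \<and> C2_real a
        \<and> (\<exists>\<eta>. is_BG_map m (rot_surf a) \<eta> \<and> C1_on_dom \<eta>
              \<and> (\<forall>p \<in> pdom. mink_mean_curv_at (rot_surf a) \<eta> p (-1)))"
  proof (intro allI impI)
    fix a assume "is_alpha_star m c3 c5 a"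
    hence a: "a = A c5" by (rule alpha_star_eq)
    show "(\<forall>x. a x \<in> {b2 c3..b3 c3})
        \<and> (\<forall>x. a (x + 2 * d2 m c3) = a x)
        \<and> C2_real a
        \<and> (\<exists>\<eta>. is_BG_map m (rot_surf a) \<eta> \<and> C1_on_dom \<eta>
              \<and> (\<forall>p \<in> pdom. mink_mean_curv_at (rot_surf a) \<eta> p (-1)))"
      unfolding a using A_range A_periodic A_C2 BG C1_eta mink by blast
  qed
  show ?thesis
    using Jint_integrable_sub J_strict d2_pos P5 A_is_alpha_star P7 by blast
qed


end
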